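(* Let $H$ be a separable infinite-dimensional complex Hilbert space, $T\in\mathcal{L}(H)$ and $\lambda\in\partial\sigma(T;H)$ (the boundary of the spectrum). Then $T-\lambda I$ is not universal. In particular, if $\sigma(T;H)=\partial\sigma(T;H)$, then $T-\lambda I$ is not universal for any $\lambda\in\mathbb{C}$.
   Context: $\mathcal{L}(H)$ denotes the bounded linear operators on $H$. Operators $T_1\in\mathcal{L}(H_1)$, $T_2\in\mathcal{L}(H_2)$ are similar if there is a linear isomorphism $J:H_1\to H_2$ with $T_1=J^{-1}T_2J$. An operator $U\in\mathcal{L}(H)$ is universal if for every $T\in\mathcal{L}(H)$ there exist a closed subspace $M\subset H$ with $U(M)\subset M$ and a constant $c\neq0$ such that $U|_M:M\to M$ and $cT:H\to H$ are similar. *)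

theory Defs
  imports "HOL-Analysis.Analysis"
begin

text \<open>Complex Hilbert spaces, encoded via their realification: a real Hilbert space
(class real_inner + complete_space) carrying a complex scalar multiplication extending
the real one, for which multiplication by i is an isometry of the real inner product.
The real inner product is the real part of the complex inner product, which is then
recovered as inner x y + i * inner x (i y) (up to convention); norm and topology agree.\<close>

class complex_vector = real_vector +
  fixes scaleC :: "complex \<Rightarrow> 'a \<Rightarrow> 'a"
  assumes scaleC_add_right: "scaleC a (x + y) = scaleC a x + scaleC a y"
    and scaleC_add_left: "scaleC (a + b) x = scaleC a x + scaleC b x"
    and scaleC_scaleC: "scaleC a (scaleC b x) = scaleC (a * b) x"
    and scaleC_one: "scaleC 1 x = x"
    and scaleR_scaleC: "scaleR r x = scaleC (complex_of_real r) x"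

class complex_inner = complex_vector + real_inner +
  assumes inner_scaleC_i: "inner (scaleC \<i> x) (scaleC \<i> y) = inner x y"

class chilbert_space = complex_inner + complete_space

definition cspan :: "'a::complex_vector set \<Rightarrow> 'a set" where
  "cspan S = {\<Sum>x\<in>F. scaleC (c x) x | F c. finite F \<and> F \<subseteq> S}"

definition csubspace :: "'a::complex_vector set \<Rightarrow> bool" where
  "csubspace M \<longleftrightarrow> 0 \<in> M \<and> (\<forall>x\<in>M. \<forall>y\<in>M. x + y \<in> M) \<and> (\<forall>c. \<forall>x\<in>M. scaleC c x \<in> M)"

definition infinite_dimensional :: "'a::complex_vector itself \<Rightarrow> bool" where
  "infinite_dimensional _ \<longleftrightarrow> \<not> (\<exists>S::'a set. finite S \<and> cspan S = UNIV)"

definition separable :: "'a::metric_space itself \<Rightarrow> bool" where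
  "separable _ \<longleftrightarrow> (\<exists>D::'a set. countable D \<and> closure D = UNIV)"

definition cblinear :: "('a::complex_inner \<Rightarrow> 'b::complex_inner) \<Rightarrow> bool" where
  "cblinear T \<longleftrightarrow> bounded_linear T \<and> (\<forall>c x. T (scaleC c x) = scaleC c (T x))"

definition invertible_op :: "('a::complex_inner \<Rightarrow> 'a) \<Rightarrow> bool" where
  "invertible_op T \<longleftrightarrow> (\<exists>S. cblinear S \<and> S \<circ> T = id \<and> T \<circ> S = id)"

definition op_spectrum :: "('a::complex_inner \<Rightarrow> 'a) \<Rightarrow> complex set" where
  "op_spectrum T = {z. \<not> invertible_op (\<lambda>x. T x - scaleC z x)}"

text \<open>U restricted to the (closed, invariant) subspace M is similar to S : H \<rightarrow> H:
there is a linear isomorphism (bounded, bijective onto M, bounded inverse) J : H \<rightarrow> M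
with U|M = J \<circ> S \<circ> J^-1, i.e. S = J^-1 \<circ> U|M \<circ> J.\<close>

definition restr_similar :: "('a::complex_inner \<Rightarrow> 'a) \<Rightarrow> 'a set \<Rightarrow> ('a \<Rightarrow> 'a) \<Rightarrow> bool" where
  "restr_similar U M S \<longleftrightarrow>
     (\<exists>J. cblinear J \<and> inj J \<and> range J = M \<and> (\<exists>C. \<forall>x. norm x \<le> C * norm (J x)) \<and>
          (\<forall>x. U (J x) = J (S x)))"

definition universal :: "('a::complex_inner \<Rightarrow> 'a) \<Rightarrow> bool" where
  "universal U \<longleftrightarrow> cblinear U \<and>
     (\<forall>T. cblinear T \<longrightarrow>
        (\<exists>M c. closed M \<and> csubspace M \<and> U ` M \<subseteq> M \<and> c \<noteq> 0 \<and>
               restr_similar U M (\<lambda>x. scaleC c (T x))))"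

end

theory Submission
  imports Defs
begin


lemma scaleC_decomp: "scaleC c (x::'a::complex_vector) = scaleR (Re c) x + scaleR (Im c) (scaleC \<i> x)"
proof -
  have "c = complex_of_real (Re c) + complex_of_real (Im c) * \<i>" by (simp add: complex_eq_iff)
  hence "scaleC c x = scaleC (complex_of_real (Re c)) x + scaleC (complex_of_real (Im c)) (scaleC \<i> x)"
    by (metis scaleC_add_left scaleC_scaleC)
  thus ?thesis by (simp only: scaleR_scaleC)
qed
lemma scaleC_ii: "scaleC \<i> (scaleC \<i> x) = - (x::'a::complex_vector)"
proof -
  have "scaleC \<i> (scaleC \<i> x) = scaleC (complex_of_real (-1)) x" by (simp add: scaleC_scaleC)
  also have "\<dots> = scaleR (-1) x" by (simp only: scaleR_scaleC)
  also have "\<dots> = - x" by simp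
  finally show ?thesis .
qed
lemma scaleC_zero[simp]: "scaleC c (0::'a::complex_vector) = 0"
proof -
  have "scaleC c 0 + scaleC c 0 = scaleC c 0" by (metis scaleC_add_right add_0)
  thus ?thesis by simp
qed
lemma scaleC_diff_r: "scaleC c (x - y::'a::complex_vector) = scaleC c x - scaleC c y"
proof -
  have "scaleC c (x - y) + scaleC c y = scaleC c x" by (metis scaleC_add_right diff_add_cancel)
  thus ?thesis by (simp add: eq_diff_eq)
qed
lemma scaleC_sum_r: "scaleC c (sum f A::'a::complex_vector) = (\<Sum>a\<in>A. scaleC c (f a))"
  by (induction A rule: infinite_finite_induct) (auto simp: scaleC_add_right)
lemma scaleC_scaleR_r: "scaleC c (scaleR r x::'a::complex_vector) = scaleR r (scaleC c x)"
  by (simp only: scaleR_scaleC scaleC_scaleC mult.commute)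

lemma inner_i_swap: "inner x (scaleC \<i> y::'a::complex_inner) = - inner (scaleC \<i> x) y"
proof -
  have "inner (scaleC \<i> x) (scaleC \<i> (scaleC \<i> y)) = inner x (scaleC \<i> y)" by (rule inner_scaleC_i)
  thus ?thesis by (simp add: scaleC_ii)
qed
lemma inner_i_self: "inner x (scaleC \<i> x::'a::complex_inner) = 0"
  using inner_i_swap[of x x] by (simp add: inner_commute)
lemma norm_scaleC: "norm (scaleC c x::'a::complex_inner) = cmod c * norm x"
proof -
  have "(norm (scaleC c x))^2 = inner (scaleC c x) (scaleC c x)" by (simp add: power2_norm_eq_inner)
  also have "\<dots> = (Re c)^2 * inner x x + (Im c)^2 * inner (scaleC \<i> x) (scaleC \<i> x)
       + 2 * Re c * Im c * inner x (scaleC \<i> x)"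
    by (simp add: scaleC_decomp[of c x] inner_add_left inner_add_right inner_commute[of "scaleC \<i> x" x] algebra_simps power2_eq_square)
  also have "\<dots> = ((Re c)^2 + (Im c)^2) * inner x x"
    by (simp only: inner_scaleC_i inner_i_self) (simp add: algebra_simps)
  also have "\<dots> = (cmod c * norm x)^2"
    by (simp add: cmod_power2 power_mult_distrib power2_norm_eq_inner)
  finally show ?thesis by (simp add: power2_eq_iff_nonneg)
qed
lemma bl_scaleC: "bounded_linear (scaleC c :: 'a::complex_inner \<Rightarrow> 'a)"
proof (rule bounded_linear_intro[where K="cmod c"])
  show "scaleC c (x + y) = scaleC c x + scaleC c y" for x y :: 'a by (rule scaleC_add_right)
  show "scaleC c (scaleR r x) = scaleR r (scaleC c x)" for r and x :: 'a by (rule scaleC_scaleR_r)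
  show "norm (scaleC c x) \<le> norm x * cmod c" for x :: 'a by (simp only: norm_scaleC mult.commute order_refl)
qed


definition ons :: "nat set \<Rightarrow> (nat \<Rightarrow> 'a::complex_inner) \<Rightarrow> bool" where
  "ons I e \<longleftrightarrow> (\<forall>j\<in>I. \<forall>k\<in>I. inner (e j) (e k) = (if j = k then 1 else 0) \<and> inner (e j) (scaleC \<i> (e k)) = 0)"

definition coef :: "(nat \<Rightarrow> 'a::complex_inner) \<Rightarrow> nat \<Rightarrow> 'a \<Rightarrow> complex" where
  "coef e k x = Complex (inner (e k) x) (inner (scaleC \<i> (e k)) x)"

definition rdot :: "complex \<Rightarrow> complex \<Rightarrow> real" where
  "rdot a b = Re a * Re b + Im a * Im b"

lemma rdot_self: "rdot a a = (cmod a)^2"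
  unfolding rdot_def cmod_power2 by (simp add: power2_eq_square)

lemma coef_add: "coef e k (x + y) = coef e k x + coef e k y"
  by (simp add: coef_def inner_add_right complex_eq_iff)
lemma coef_diff: "coef e k (x - y) = coef e k x - coef e k y"
  by (simp add: coef_def inner_diff_right complex_eq_iff)
lemma coef_scaleR: "coef e k (scaleR r x) = complex_of_real r * coef e k x"
  by (simp add: coef_def complex_eq_iff)
lemma coef_zero[simp]: "coef e k 0 = 0"
  by (simp add: coef_def complex_eq_iff)
lemma coef_sum: "coef e k (sum f A) = (\<Sum>a\<in>A. coef e k (f a))"
  by (induction A rule: infinite_finite_induct) (auto simp: coef_add)
lemma coef_i: "coef e k (scaleC \<i> x) = \<i> * coef e k x"
  by (simp add: coef_def complex_eq_iff inner_i_swap scaleC_ii)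
lemma coef_scaleC: "coef e k (scaleC c x) = c * coef e k x"
proof -
  have "coef e k (scaleC c x) = complex_of_real (Re c) * coef e k x + complex_of_real (Im c) * (\<i> * coef e k x)"
    by (simp add: scaleC_decomp[of c x] coef_add coef_scaleR coef_i)
  also have "\<dots> = (complex_of_real (Re c) + complex_of_real (Im c) * \<i>) * coef e k x" by (simp add: algebra_simps)
  also have "complex_of_real (Re c) + complex_of_real (Im c) * \<i> = c" by (simp add: complex_eq_iff)
  finally show ?thesis .
qed
lemma bl_coef: "bounded_linear (coef e k)"
proof (rule bounded_linear_intro[where K="2 * norm (e k)"])
  fix x
  have "cmod (coef e k x) \<le> abs (inner (e k) x) + abs (inner (scaleC \<i> (e k)) x)"
    using cmod_le[of "coef e k x"] by (simp only: coef_def complex.sel)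
  also have "\<dots> \<le> norm (e k) * norm x + norm (scaleC \<i> (e k)) * norm x"
    by (intro add_mono Cauchy_Schwarz_ineq2)
  also have "\<dots> = norm x * (2 * norm (e k))" by (simp only: norm_scaleC norm_ii mult_1_left) simp
  finally show "norm (coef e k x) \<le> norm x * (2 * norm (e k))" by simp
next
  show "coef e k (x + y) = coef e k x + coef e k y" for x y by (rule coef_add)
  show "coef e k (scaleR r x) = scaleR r (coef e k x)" for r x by (simp add: coef_scaleR scaleR_conv_of_real)
qed

lemma inner_scaleC_basis: "inner y (scaleC a (e k)) = rdot a (coef e k y)"
  by (simp add: scaleC_decomp[of a "e k"] inner_add_right coef_def rdot_def inner_commute)

lemma coef_basis: "ons I e \<Longrightarrow> j \<in> I \<Longrightarrow> k \<in> I \<Longrightarrow> coef e k (e j) = (if j = k then 1 else 0)"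
  unfolding ons_def coef_def by (auto simp: complex_eq_iff inner_commute)

lemma coef_sum_basis:
  assumes "ons I e" "finite F" "F \<subseteq> I" "k \<in> I"
  shows "coef e k (\<Sum>j\<in>F. scaleC (a j) (e j)) = (if k \<in> F then a k else 0)"
proof -
  have "coef e k (\<Sum>j\<in>F. scaleC (a j) (e j)) = (\<Sum>j\<in>F. a j * (if j = k then 1 else 0))"
    using assms by (auto simp: coef_sum coef_scaleC coef_basis intro!: sum.cong)
  also have "\<dots> = (if k \<in> F then a k else 0)"
    using assms(2) by (simp add: if_distrib sum.delta' cong: if_cong)
  finally show ?thesis .
qed

lemma pyth:
  assumes "ons I e" "finite F" "F \<subseteq> I"
  shows "(norm (\<Sum>j\<in>F. scaleC (a j) (e j)))^2 = (\<Sum>j\<in>F. (cmod (a j))^2)"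
proof -
  let ?P = "\<Sum>j\<in>F. scaleC (a j) (e j)"
  have "(norm ?P)^2 = inner ?P ?P" by (simp add: power2_norm_eq_inner)
  also have "\<dots> = (\<Sum>j\<in>F. inner ?P (scaleC (a j) (e j)))" by (simp add: inner_sum_right)
  also have "\<dots> = (\<Sum>j\<in>F. rdot (a j) (coef e j ?P))" by (simp add: inner_scaleC_basis)
  also have "\<dots> = (\<Sum>j\<in>F. (cmod (a j))^2)"
    using assms by (intro sum.cong refl) (auto simp: coef_sum_basis rdot_self subset_iff)
  finally show ?thesis .
qed

lemma bessel:
  assumes "ons I e" "finite F" "F \<subseteq> I"
  shows "(\<Sum>k\<in>F. (cmod (coef e k x))^2) \<le> (norm x)^2"
proof -
  let ?P = "\<Sum>k\<in>F. scaleC (coef e k x) (e k)"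
  have c0: "coef e k (x - ?P) = 0" if "k \<in> F" for k
  proof -
    have "k \<in> I" using assms that by auto
    hence "coef e k ?P = coef e k x" using coef_sum_basis[OF assms \<open>k \<in> I\<close>, of "\<lambda>k. coef e k x"] that by simp
    thus ?thesis by (simp add: coef_diff)
  qed
  have "inner (x - ?P) ?P = (\<Sum>k\<in>F. rdot (coef e k x) (coef e k (x - ?P)))"
    by (simp add: inner_sum_right inner_scaleC_basis)
  also have "\<dots> = 0" using c0 by (simp add: rdot_def)
  finally have o: "inner (x - ?P) ?P = 0" .
  have "(norm x)^2 = inner (?P + (x - ?P)) (?P + (x - ?P))" by (simp add: power2_norm_eq_inner)
  also have "\<dots> = (norm ?P)^2 + (norm (x - ?P))^2 + 2 * inner (x - ?P) ?P"
    by (simp only: inner_add_left inner_add_right power2_norm_eq_inner inner_commute[of ?P "x - ?P"])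
  finally have "(norm x)^2 \<ge> (norm ?P)^2" using o by simp
  thus ?thesis using pyth[OF assms] by simp
qed


lemma ons_mono: "ons I e \<Longrightarrow> J \<subseteq> I \<Longrightarrow> ons J e"
  unfolding ons_def by blast

lemma exists_next:
  assumes inf: "infinite_dimensional TYPE('a::complex_inner)" and o: "ons {..<n} (e :: nat \<Rightarrow> 'a)"
  shows "\<exists>v::'a. norm v = 1 \<and> (\<forall>k<n. inner v (e k) = 0 \<and> inner v (scaleC \<i> (e k)) = 0)"
proof -
  have "cspan (e ` {..<n}) \<noteq> UNIV" using inf unfolding infinite_dimensional_def by blast
  then obtain x where x: "x \<notin> cspan (e ` {..<n})" by blast
  define w where "w = x - (\<Sum>k<n. scaleC (coef e k x) (e k))"
  have cw: "coef e k w = 0" if "k < n" for k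
    using o that by (simp add: w_def coef_diff coef_sum_basis)
  have inj: "inj_on e {..<n}"
  proof (rule inj_onI)
    fix j k assume "j \<in> {..<n}" "k \<in> {..<n}" "e j = e k"
    thus "j = k" using coef_basis[OF o, of j k] coef_basis[OF o, of k k] by (auto split: if_splits)
  qed
  have "w \<noteq> 0"
  proof
    assume "w = 0"
    hence xe: "x = (\<Sum>k<n. scaleC (coef e k x) (e k))" by (simp add: w_def)
    also have "\<dots> = (\<Sum>y\<in>e ` {..<n}. scaleC (coef e (the_inv_into {..<n} e y) x) y)"
      using inj by (simp add: sum.reindex the_inv_into_f_f)
    finally have xe2: "x = (\<Sum>y\<in>e ` {..<n}. scaleC (coef e (the_inv_into {..<n} e y) x) y)" .
    have "x \<in> cspan (e ` {..<n})" unfolding cspan_def mem_Collect_eq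
      apply (rule exI[of _ "e ` {..<n}"])
      apply (rule exI[of _ "\<lambda>y. coef e (the_inv_into {..<n} e y) x"])
      using xe2 by simp
    with x show False by simp
  qed
  define v where "v = scaleR (1 / norm w) w"
  have "norm v = 1" using \<open>w \<noteq> 0\<close> by (simp add: v_def)
  moreover have "inner v (e k) = 0 \<and> inner v (scaleC \<i> (e k)) = 0" if "k < n" for k
  proof -
    have "inner (e k) w = 0" "inner (scaleC \<i> (e k)) w = 0"
      using cw[OF that] by (simp_all add: coef_def complex_eq_iff)
    thus ?thesis unfolding v_def inner_scaleR_left by (simp only: inner_commute[of w]) simp
  qed
  ultimately show ?thesis by blast
qed

definition good :: "nat \<Rightarrow> (nat \<Rightarrow> 'a::complex_inner) \<Rightarrow> 'a \<Rightarrow> bool" where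
  "good n e v \<longleftrightarrow> norm v = 1 \<and> (\<forall>k<n. inner v (e k) = 0 \<and> inner v (scaleC \<i> (e k)) = 0)"

primrec seqp :: "nat \<Rightarrow> nat \<Rightarrow> 'a::complex_inner" where
  "seqp 0 = (\<lambda>_. 0)"
| "seqp (Suc n) = (seqp n)(n := (SOME v. good n (seqp n) v))"

definition ebas :: "nat \<Rightarrow> 'a::complex_inner" where
  "ebas k = seqp (Suc k) k"

lemma seqp_ebas: "k < n \<Longrightarrow> seqp n k = ebas k"
  by (induction n) (auto simp: ebas_def less_Suc_eq)

lemma ons_extend:
  assumes "ons {..<n} e" "good n e v"
  shows "ons {..<Suc n} (e(n := v))"
  unfolding ons_def
proof (intro ballI)
  fix j k assume j: "j \<in> {..<Suc n}" and k: "k \<in> {..<Suc n}"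
  have g: "norm v = 1" "\<And>k. k < n \<Longrightarrow> inner v (e k) = 0 \<and> inner v (scaleC \<i> (e k)) = 0"
    using assms(2) by (auto simp: good_def)
  show "inner ((e(n := v)) j) ((e(n := v)) k) = (if j = k then 1 else 0) \<and>
        inner ((e(n := v)) j) (scaleC \<i> ((e(n := v)) k)) = 0"
  proof (cases "j = n"; cases "k = n")
    assume "j = n" "k = n"
    thus ?thesis using g(1) by (simp add: inner_i_self power2_norm_eq_inner[symmetric])
  next
    assume "j = n" "k \<noteq> n"
    thus ?thesis using g(2)[of k] k by auto
  next
    assume "j \<noteq> n" "k = n"
    thus ?thesis using g(2)[of j] j
      by (simp add: inner_i_swap[of "e j" v] inner_commute[of "scaleC \<i> (e j)" v] inner_commute[of "e j" v])
  next
    assume "j \<noteq> n" "k \<noteq> n"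
    thus ?thesis using assms(1) j k by (auto simp: ons_def)
  qed
qed

lemma ons_seqp:
  assumes inf: "infinite_dimensional TYPE('a::complex_inner)"
  shows "ons {..<n} (seqp n :: nat \<Rightarrow> 'a)"
proof (induction n)
  case 0 show ?case by (simp add: ons_def)
next
  case (Suc n)
  have "\<exists>v. good n (seqp n :: nat \<Rightarrow> 'a) v" using exists_next[OF inf Suc] by (simp add: good_def)
  hence "good n (seqp n) (SOME v. good n (seqp n :: nat \<Rightarrow> 'a) v)" by (rule someI_ex)
  thus ?case unfolding seqp.simps(2) by (rule ons_extend[OF Suc])
qed

lemma ons_ebas:
  assumes inf: "infinite_dimensional TYPE('a::complex_inner)"
  shows "ons UNIV (ebas :: nat \<Rightarrow> 'a)"
  unfolding ons_def
proof (intro ballI)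
  fix j k
  let ?n = "Suc (max j k)"
  have "ons {..<?n} (seqp ?n :: nat \<Rightarrow> 'a)" by (rule ons_seqp[OF inf])
  hence "inner (seqp ?n j) (seqp ?n k :: 'a) = (if j = k then 1 else 0) \<and> inner (seqp ?n j) (scaleC \<i> (seqp ?n k :: 'a)) = 0"
    unfolding ons_def by auto
  moreover have "seqp ?n j = (ebas j :: 'a)" "seqp ?n k = (ebas k :: 'a)" by (rule seqp_ebas, simp)+
  ultimately show "inner (ebas j) (ebas k :: 'a) = (if j = k then 1 else 0) \<and> inner (ebas j) (scaleC \<i> (ebas k :: 'a)) = 0"
    by simp
qed


context chilbert_space begin
subclass banach ..
end

definition bshift :: "(nat \<Rightarrow> 'a::complex_inner) \<Rightarrow> 'a \<Rightarrow> 'a" where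
  "bshift e x = (\<Sum>n. scaleC (coef e (Suc n) x) (e n))"

lemma summ_sq: assumes "ons UNIV e" shows "summable (\<lambda>n. (cmod (coef e n x))^2)"
  by (rule summableI_nonneg_bounded[where x="(norm x)^2"]) (use bessel[OF assms] in auto)

lemma summ_shift:
  assumes o: "ons UNIV (e :: nat \<Rightarrow> 'a::chilbert_space)"
  shows "summable (\<lambda>n. scaleC (coef e (Suc n) x) (e n))"
  unfolding summable_Cauchy
proof (intro allI impI)
  fix \<epsilon> :: real assume "\<epsilon> > 0"
  have "summable (\<lambda>n. (cmod (coef e (Suc n) x))^2)"
    by (subst summable_Suc_iff) (rule summ_sq[OF o])
  then obtain N where N: "\<And>m n. m \<ge> N \<Longrightarrow> norm (\<Sum>k\<in>{m..<n}. (cmod (coef e (Suc k) x))^2) < \<epsilon>^2"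
    unfolding summable_Cauchy using \<open>\<epsilon> > 0\<close> by (meson zero_less_power)
  show "\<exists>N. \<forall>m\<ge>N. \<forall>n. norm (\<Sum>k\<in>{m..<n}. scaleC (coef e (Suc k) x) (e k)) < \<epsilon>"
  proof (intro exI allI impI)
    fix m n assume "m \<ge> N"
    have "(norm (\<Sum>k\<in>{m..<n}. scaleC (coef e (Suc k) x) (e k)))^2 = (\<Sum>k\<in>{m..<n}. (cmod (coef e (Suc k) x))^2)"
      by (rule pyth[OF o]) auto
    also have "\<dots> < \<epsilon>^2" using N[OF \<open>m \<ge> N\<close>, of n] by (simp add: sum_nonneg)
    finally show "norm (\<Sum>k\<in>{m..<n}. scaleC (coef e (Suc k) x) (e k)) < \<epsilon>"
      using \<open>\<epsilon> > 0\<close> by (meson abs_le_square_iff abs_of_pos norm_ge_zero order_less_le power_less_imp_less_base)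
  qed
qed

lemma bshift_norm:
  assumes o: "ons UNIV (e :: nat \<Rightarrow> 'a::chilbert_space)"
  shows "norm (bshift e x) \<le> norm x"
proof -
  have le: "norm (\<Sum>n<N. scaleC (coef e (Suc n) x) (e n)) \<le> norm x" for N
  proof -
    have "(norm (\<Sum>n<N. scaleC (coef e (Suc n) x) (e n)))^2 = (\<Sum>n<N. (cmod (coef e (Suc n) x))^2)"
      by (rule pyth[OF o]) auto
    also have "\<dots> \<le> (cmod (coef e 0 x))^2 + (\<Sum>n<N. (cmod (coef e (Suc n) x))^2)" by simp
    also have "\<dots> = (\<Sum>n<Suc N. (cmod (coef e n x))^2)" by (simp only: sum.lessThan_Suc_shift)
    also have "\<dots> \<le> (norm x)^2" by (rule bessel[OF o]) auto
    finally show ?thesis using power2_le_imp_le by fastforce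
  qed
  have "(\<lambda>N. norm (\<Sum>n<N. scaleC (coef e (Suc n) x) (e n))) \<longlonglongrightarrow> norm (bshift e x)"
    unfolding bshift_def by (intro tendsto_norm summable_LIMSEQ summ_shift[OF o])
  thus ?thesis using le by (intro LIMSEQ_le_const2) auto
qed

lemma bshift_add:
  assumes o: "ons UNIV (e :: nat \<Rightarrow> 'a::chilbert_space)"
  shows "bshift e (x + y) = bshift e x + bshift e y"
  unfolding bshift_def using summ_shift[OF o, of x] summ_shift[OF o, of y]
  by (simp add: coef_add scaleC_add_left suminf_add)

lemma bshift_scaleC:
  assumes o: "ons UNIV (e :: nat \<Rightarrow> 'a::chilbert_space)"
  shows "bshift e (scaleC c x) = scaleC c (bshift e x)"
  unfolding bshift_def
  using bounded_linear.suminf[OF bl_scaleC summ_shift[OF o, of x], of c]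
  by (simp add: coef_scaleC scaleC_scaleC)

lemma cblinear_bshift:
  assumes o: "ons UNIV (e :: nat \<Rightarrow> 'a::chilbert_space)"
  shows "cblinear (bshift e)"
  unfolding cblinear_def
proof (intro conjI allI)
  show "bounded_linear (bshift e)"
    by (rule bounded_linear_intro[where K=1])
       (auto simp: bshift_add[OF o] bshift_norm[OF o] scaleR_scaleC bshift_scaleC[OF o])
qed (rule bshift_scaleC[OF o])

definition vz :: "(nat \<Rightarrow> 'a::complex_inner) \<Rightarrow> complex \<Rightarrow> 'a" where
  "vz e z = (\<Sum>n. scaleC (z^n) (e n))"

lemma norm_e: "ons UNIV e \<Longrightarrow> norm (e n) = 1"
  unfolding ons_def by (metis norm_eq_sqrt_inner real_sqrt_one UNIV_I)

lemma summ_vz: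
  assumes o: "ons UNIV (e :: nat \<Rightarrow> 'a::chilbert_space)" and z: "cmod z < 1"
  shows "summable (\<lambda>n. scaleC (z^n) (e n))"
  by (rule summable_norm_cancel)
     (simp add: norm_scaleC norm_e[OF o] norm_power summable_geometric z)

lemma coef_vz:
  assumes o: "ons UNIV (e :: nat \<Rightarrow> 'a::chilbert_space)" and z: "cmod z < 1"
  shows "coef e m (vz e z) = z^m"
proof -
  have "coef e m (vz e z) = (\<Sum>n. coef e m (scaleC (z^n) (e n)))"
    unfolding vz_def by (rule bounded_linear.suminf[OF bl_coef summ_vz[OF o z]])
  also have "\<dots> = (\<Sum>n. if n = m then z^n else 0)"
    by (rule arg_cong[where f=suminf], rule ext) (simp add: coef_scaleC coef_basis[OF o])
  also have "\<dots> = z^m" by (rule sums_unique[OF sums_single, symmetric])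
  finally show ?thesis .
qed

lemma vz_nonzero:
  assumes o: "ons UNIV (e :: nat \<Rightarrow> 'a::chilbert_space)" and z: "cmod z < 1"
  shows "vz e z \<noteq> 0"
  using coef_vz[OF o z, of 0] by auto

lemma bshift_vz:
  assumes o: "ons UNIV (e :: nat \<Rightarrow> 'a::chilbert_space)" and z: "cmod z < 1"
  shows "bshift e (vz e z) = scaleC z (vz e z)"
proof -
  have "bshift e (vz e z) = (\<Sum>n. scaleC z (scaleC (z^n) (e n)))"
    unfolding bshift_def by (simp add: coef_vz[OF o z] scaleC_scaleC)
  also have "\<dots> = scaleC z (vz e z)"
    unfolding vz_def by (rule bounded_linear.suminf[OF bl_scaleC summ_vz[OF o z], symmetric])
  finally show ?thesis .
qed


lemma scaleC_zero_left: "scaleC 0 (x::'a::complex_vector) = 0"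
proof -
  have "scaleC 0 x = scaleC (complex_of_real 0) x" by simp
  also have "\<dots> = scaleR 0 x" by (simp only: scaleR_scaleC)
  finally show ?thesis by simp
qed

lemma cblinear_zero: "cblinear J \<Longrightarrow> J 0 = 0"
  unfolding cblinear_def using bounded_linear.linear linear_0 by blast

lemma not_invertible_kernel:
  assumes "V y = 0" "y \<noteq> 0"
  shows "\<not> invertible_op V"
proof
  assume "invertible_op V"
  then obtain S where S: "cblinear S" "S \<circ> V = id" unfolding invertible_op_def by blast
  have "S (V y) = y" using S(2) by (metis comp_apply id_apply)
  hence "S 0 = y" using assms(1) by simp
  thus False using cblinear_zero[OF S(1)] assms(2) by simp
qed

lemma universal_ball:
  assumes inf: "infinite_dimensional TYPE('a::chilbert_space)"
    and U: "universal (\<lambda>x. T x - scaleC l x :: 'a)"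
  shows "\<exists>r>0. ball l r \<subseteq> op_spectrum T"
proof -
  define e :: "nat \<Rightarrow> 'a" where "e = ebas"
  have o: "ons UNIV e" unfolding e_def by (rule ons_ebas[OF inf])
  have cS: "cblinear (bshift e)" by (rule cblinear_bshift[OF o])
  obtain M c where c: "c \<noteq> 0" and rs: "restr_similar (\<lambda>x. T x - scaleC l x) M (\<lambda>x. scaleC c (bshift e x))"
    using U cS unfolding universal_def by blast
  obtain J where J: "cblinear J" "inj J" "\<And>x. T (J x) - scaleC l (J x) = J (scaleC c (bshift e x))"
    using rs unfolding restr_similar_def by blast
  have "ball l (cmod c) \<subseteq> op_spectrum T"
  proof
    fix \<mu> assume "\<mu> \<in> ball l (cmod c)"
    hence wl: "cmod (\<mu> - l) < cmod c" by (simp add: dist_norm norm_minus_commute)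
    define w where "w = \<mu> - l"
    define z where "z = w / c"
    have z: "cmod z < 1" using wl c by (simp add: z_def w_def norm_divide divide_less_eq)
    define v where "v = vz e z"
    have v0: "v \<noteq> 0" unfolding v_def by (rule vz_nonzero[OF o z])
    have Sv: "bshift e v = scaleC z v" unfolding v_def by (rule bshift_vz[OF o z])
    have cz: "c * z = w" using c by (simp add: z_def)
    have Jv: "T (J v) - scaleC l (J v) = scaleC w (J v)"
      using J(3)[of v] J(1) by (simp add: Sv scaleC_scaleC cz cblinear_def)
    have "T (J v) - scaleC \<mu> (J v) = scaleC (w + l - \<mu>) (J v)"
    proof -
      have "scaleC \<mu> (J v) = scaleC w (J v) + scaleC l (J v)"
        by (simp add: w_def scaleC_add_left[symmetric])
      thus ?thesis using Jv by (simp add: w_def algebra_simps scaleC_zero_left)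
    qed
    also have "\<dots> = 0" by (simp add: w_def scaleC_zero_left)
    finally have k: "(\<lambda>x. T x - scaleC \<mu> x) (J v) = 0" by simp
    have "J v \<noteq> 0" using J(2) cblinear_zero[OF J(1)] v0 by (metis injD)
    thus "\<mu> \<in> op_spectrum T" unfolding op_spectrum_def using not_invertible_kernel[of "\<lambda>x. T x - scaleC \<mu> x" "J v", OF k] by simp
  qed
  moreover have "cmod c > 0" using c by simp
  ultimately show ?thesis by blast
qed

theorem corollary2p4:
  fixes T :: "'h::chilbert_space \<Rightarrow> 'h" and l :: complex
  assumes "separable TYPE('h)" and "infinite_dimensional TYPE('h)"
    and "cblinear T"
  shows "(l \<in> frontier (op_spectrum T) \<longrightarrow> \<not> universal (\<lambda>x. T x - scaleC l x)) \<and>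
         (op_spectrum T = frontier (op_spectrum T) \<longrightarrow>
            (\<forall>\<mu>. \<not> universal (\<lambda>x. T x - scaleC \<mu> x)))"
proof -
  have int: "\<mu> \<in> interior (op_spectrum T)" if "universal (\<lambda>x. T x - scaleC \<mu> x)" for \<mu>
    using universal_ball[OF assms(2) that] mem_interior by blast
  show ?thesis
  proof (intro conjI impI allI notI)
    assume "l \<in> frontier (op_spectrum T)" "universal (\<lambda>x. T x - scaleC l x)"
    thus False using int[of l] by (simp add: frontier_def)
  next
    fix \<mu> assume eq: "op_spectrum T = frontier (op_spectrum T)" and u: "universal (\<lambda>x. T x - scaleC \<mu> x)"
    have "\<mu> \<in> op_spectrum T" using int[OF u] interior_subset by blast
    hence "\<mu> \<in> frontier (op_spectrum T)" using eq by simp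
    thus False using int[OF u] by (simp add: frontier_def)
  qed
qed

end
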